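(* Let $\alpha,\alpha'$ be Morse–Thue decorated sentences over a finite alphabet $A$. Suppose that $\alpha$ and $\alpha'$ have a common final segment (identical as strings of decorated letters, including decorated stop signs) containing at least $l$ letters from $A$, where $l\ge0$ is an integer, and that $\big||\alpha|-|\alpha'|\big|\le l/2$. Then $|\alpha|=|\alpha'|$.
   Context: Morse–Thue sequence: start from $0$ and repeatedly apply the substitution $0\mapsto01$, $1\mapsto10$, obtaining $0,01,0110,01101001,\dots$; the limit infinite sequence is $(t(m))_{m\ge0}$ with values in $\{0,1\}$. A sentence over $A$ is a finite string in $A\cup\{s\}$ ending with the stop sign $s\notin A$ (words of $A$ each terminated by $s$). Levels of letters: the first letter has level 1 if it is not $s$ and 0 otherwise; each subsequent letter has level one more than the previous letter if it is not $s$, and the same level as the previous letter if it is $s$. The length $|\alpha|$ is the level of the last letter (i.e. the number of letters from $A$). The Morse–Thue decoration of $\alpha$ replaces every letter $x$ (including stop signs) of level $m$ by $(x,t(m))$. *)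

theory Defs
  imports Complex_Main
begin

fun mt_word :: "nat \<Rightarrow> nat list" where
  "mt_word 0 = [0]"
| "mt_word (Suc n) = concat (map (\<lambda>b. if b = 0 then [0, 1] else [1, 0]) (mt_word n))"

text \<open>The limit sequence: mt_word n has length 2^n and is a prefix of mt_word (Suc n);
  the m-th term is read off from mt_word (Suc m), which has length greater than m.\<close>
definition thue_morse :: "nat \<Rightarrow> nat" where
  "thue_morse m = mt_word (Suc m) ! m"

definition sentence :: "'a set \<Rightarrow> 'a \<Rightarrow> 'a list \<Rightarrow> bool" where
  "sentence A s \<alpha> \<longleftrightarrow> \<alpha> \<noteq> [] \<and> last \<alpha> = s \<and> set \<alpha> \<subseteq> A \<union> {s}"

fun levels_from :: "'a \<Rightarrow> nat \<Rightarrow> 'a list \<Rightarrow> nat list" where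
  "levels_from s p [] = []"
| "levels_from s p (x # xs) =
     (let q = (if x = s then p else Suc p) in q # levels_from s q xs)"

definition levels :: "'a \<Rightarrow> 'a list \<Rightarrow> nat list" where
  "levels s \<alpha> = levels_from s 0 \<alpha>"

definition sent_len :: "'a \<Rightarrow> 'a list \<Rightarrow> nat" where
  "sent_len s \<alpha> = last (levels s \<alpha>)"

definition mt_decorate :: "'a \<Rightarrow> 'a list \<Rightarrow> ('a \<times> nat) list" where
  "mt_decorate s \<alpha> = zip \<alpha> (map thue_morse (levels s \<alpha>))"

end

theory Submission
  imports Defs
begin

fun tm :: "nat \<Rightarrow> nat" where
  "tm n = (if n = 0 then 0 else if even n then tm (n div 2) else 1 - tm (n div 2))"

declare tm.simps[simp del]

lemma tm_le1: "tm n \<le> 1"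
  by (induction n rule: tm.induct) (subst tm.simps, auto)

lemma tm_even: "tm (2*m) = tm m"
  by (subst tm.simps) (auto simp: tm.simps[of 0])

lemma tm_odd: "tm (2*m+1) = 1 - tm m"
  by (subst tm.simps) auto

lemma concat_nth2:
  assumes "\<And>x. length (f x) = 2" "k < length xs" "b < 2"
  shows "concat (map f xs) ! (2*k+b) = f (xs!k) ! b"
  using assms(2)
proof (induction xs arbitrary: k)
  case Nil then show ?case by simp
next
  case (Cons x xs)
  show ?case
  proof (cases k)
    case 0 then show ?thesis using assms by (simp add: nth_append)
  next
    case (Suc k')
    then have "concat (map f (x#xs)) ! (2*k+b) = concat (map f xs) ! (2*k'+b)"
      using assms by (simp add: nth_append)
    then show ?thesis using Cons Suc by simp
  qed
qed

lemma length_concat2: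
  assumes "\<And>x. length (f x) = 2"
  shows "length (concat (map f xs)) = 2 * length xs"
  using assms by (induction xs) auto

lemma mt_word_props: "length (mt_word n) = 2^n \<and> (\<forall>k<2^n. mt_word n ! k = tm k)"
proof (induction n)
  case 0 then show ?case by (simp add: tm.simps)
next
  case (Suc n)
  define f where "f = (\<lambda>b::nat. if b = 0 then [0, 1::nat] else [1, 0])"
  have f2: "\<And>x. length (f x) = 2" unfolding f_def by auto
  have eq: "mt_word (Suc n) = concat (map f (mt_word n))" unfolding f_def by simp
  have len: "length (mt_word (Suc n)) = 2^Suc n"
    using eq length_concat2[of f "mt_word n", OF f2] Suc by simp
  have "mt_word (Suc n) ! k = tm k" if k: "k < 2^Suc n" for k
  proof -
    have kd: "k div 2 < length (mt_word n)" using k Suc by auto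
    have kk: "k = 2 * (k div 2) + k mod 2" by simp
    have "mt_word (Suc n) ! k = f (mt_word n ! (k div 2)) ! (k mod 2)"
      using concat_nth2[OF f2 kd, of "k mod 2"] eq kk by simp
    also have "\<dots> = f (tm (k div 2)) ! (k mod 2)" using Suc kd by simp
    also have "\<dots> = tm k"
    proof (cases "even k")
      case True
      then have "tm k = tm (k div 2)" using tm_even[of "k div 2"] by simp
      then show ?thesis using True tm_le1[of "k div 2"] unfolding f_def
        by (auto simp: even_iff_mod_2_eq_zero)
    next
      case False
      then have "k = 2*(k div 2)+1" by presburger
      then have "tm k = 1 - tm (k div 2)" using tm_odd[of "k div 2"] by simp
      then show ?thesis using False tm_le1[of "k div 2"] unfolding f_def
        by (auto simp: odd_iff_mod_2_eq_one)
    qed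
    finally show ?thesis .
  qed
  then show ?case using len by blast
qed

lemma thue_morse_tm: "thue_morse m = tm m"
proof -
  have "Suc m < 2 ^ Suc m" by (rule less_exp)
  then have "m < 2 ^ Suc m" by simp
  then show ?thesis unfolding thue_morse_def using mt_word_props by blast
qed

lemma tm_pair: "tm (2*m) \<noteq> tm (2*m+1)"
  using tm_even[of m] tm_odd[of m] tm_le1[of m] by arith

lemma no_triple: "\<not> (tm x = tm (x+1) \<and> tm (x+1) = tm (x+2))"
proof (cases "even x")
  case True
  then obtain m where "x = 2*m" by blast
  then show ?thesis using tm_pair[of m] by auto
next
  case False
  then obtain m where m: "x + 1 = 2*m" by (metis even_Suc Suc_eq_plus1 evenE)
  then have "x + 2 = 2*m+1" by simp
  then show ?thesis using m tm_pair[of m] by auto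
qed

lemma cube_free: "0 < d \<Longrightarrow> \<exists>j<2*d. tm (i+j) \<noteq> tm (i+j+d)"
proof (induction d arbitrary: i rule: less_induct)
  case (less d)
  show ?case
  proof (rule ccontr)
    assume "\<not> ?case"
    then have P: "\<And>j. j < 2*d \<Longrightarrow> tm (i+j) = tm (i+j+d)" by auto
    show False
    proof (cases "even d")
      case True
      then obtain e where de: "d = 2*e" by blast
      with less have e0: "0 < e" "e < d" by auto
      define m0 where "m0 = (i+1) div 2"
      have "tm (m0+j) = tm (m0+j+e)" if j: "j < 2*e" for j
      proof -
        have "2*(m0+j) - i < 2*d" "2*(m0+j) \<ge> i" using j de unfolding m0_def by auto
        then have "tm (i + (2*(m0+j) - i)) = tm (i + (2*(m0+j) - i) + d)" using P by blast
        moreover have "i + (2*(m0+j) - i) = 2*(m0+j)" "i + (2*(m0+j) - i) + d = 2*(m0+j+e)"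
          using \<open>2*(m0+j) \<ge> i\<close> de by auto
        ultimately have "tm (2*(m0+j)) = tm (2*(m0+j+e))" by simp
        then show ?thesis by (simp only: tm_even)
      qed
      then show False using less.IH[OF e0(2) e0(1), of m0] by auto
    next
      case False
      then obtain e where de: "d = 2*e+1" by (metis oddE)
      show False
      proof (cases "e = 0")
        case True
        then show False using P[of 0] P[of 1] de no_triple[of i] by (auto simp: add.commute)
      next
        case False
        define m where "m = (i+1) div 2"
        have key: "tm (m'+e) = tm (m'+e+1)" if "2*m' \<ge> i" "2*m'+1 < i + 2*d" for m'
        proof -
          have a: "tm (2*m') = tm (2*m'+d)"
            using P[of "2*m'-i"] that by auto
          have b: "tm (2*m'+1) = tm (2*m'+1+d)"
            using P[of "2*m'+1-i"] that by auto
          have a': "tm m' = 1 - tm (m'+e)"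
            using a tm_even[of m'] tm_odd[of "m'+e"] de by (simp add: algebra_simps)
          have b': "1 - tm m' = tm (m'+e+1)"
            using b tm_odd[of m'] tm_even[of "m'+e+1"] de by (simp add: algebra_simps)
          show ?thesis using a' b' tm_le1[of m'] tm_le1[of "m'+e"] tm_le1[of "m'+e+1"] by linarith
        qed
        have "tm (m+e) = tm (m+e+1)" using key[of m] False de unfolding m_def by auto
        moreover have "tm (m+1+e) = tm (m+1+e+1)" using key[of "m+1"] False de unfolding m_def by auto
        ultimately show False using no_triple[of "m+e"] by (simp add: algebra_simps)
      qed
    qed
  qed
qed


lemma length_levels_from[simp]: "length (levels_from s p xs) = length xs"
  by (induction xs arbitrary: p) (auto simp: Let_def)

lemma levels_from_Nil_iff[simp]: "levels_from s p xs = [] \<longleftrightarrow> xs = []"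
  by (metis length_levels_from length_0_conv)

lemma levels_from_append:
  "levels_from s p (xs @ ys) = levels_from s p xs @ levels_from s (last (p # levels_from s p xs)) ys"
  by (induction xs arbitrary: p) (auto simp: Let_def)

lemma last_levels_from:
  "\<gamma> \<noteq> [] \<Longrightarrow> last (levels_from s q \<gamma>) = q + length (filter (\<lambda>x. x \<noteq> s) \<gamma>)"
proof (induction \<gamma> arbitrary: q)
  case Nil then show ?case by simp
next
  case (Cons x xs)
  show ?case
  proof (cases "xs = []")
    case True then show ?thesis by (auto simp: Let_def)
  next
    case False
    then show ?thesis using Cons.IH[OF False] by (auto simp: Let_def)
  qed
qed

lemma tm_transfer:
  "map tm (levels_from s q \<gamma>) = map tm (levels_from s q' \<gamma>) \<Longrightarrow> 1 \<le> r \<Longrightarrow>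
   r \<le> length (filter (\<lambda>x. x \<noteq> s) \<gamma>) \<Longrightarrow> tm (q+r) = tm (q'+r)"
proof (induction \<gamma> arbitrary: q q' r)
  case Nil then show ?case by simp
next
  case (Cons x xs)
  show ?case
  proof (cases "x = s")
    case True
    then have t: "map tm (levels_from s q xs) = map tm (levels_from s q' xs)"
      using Cons.prems(1) by (simp add: Let_def)
    have "r \<le> length (filter (\<lambda>x. x \<noteq> s) xs)" using Cons.prems(3) True by simp
    then show ?thesis using Cons.IH[OF t Cons.prems(2)] by blast
  next
    case False
    then have h: "tm (Suc q) = tm (Suc q')"
      and t: "map tm (levels_from s (Suc q) xs) = map tm (levels_from s (Suc q') xs)"
      using Cons.prems(1) by (auto simp: Let_def)
    show ?thesis
    proof (cases "r = 1")
      case True then show ?thesis using h by simp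
    next
      case r: False
      have r1: "1 \<le> r - 1" using r Cons.prems(2) by simp
      have r2: "r - 1 \<le> length (filter (\<lambda>x. x \<noteq> s) xs)" using Cons.prems(3) False by simp
      have "tm (Suc q + (r-1)) = tm (Suc q' + (r-1))"
        using Cons.IH[OF t r1 r2] .
      then show ?thesis using r Cons.prems(2) by simp
    qed
  qed
qed

lemma suffix_data:
  assumes "mt_decorate s \<alpha> = u @ \<beta>"
  shows "\<exists>a q. \<alpha> = take a \<alpha> @ map fst \<beta> \<and> map snd \<beta> = map thue_morse (levels_from s q (map fst \<beta>))
            \<and> sent_len s \<alpha> = (if \<beta> = [] then sent_len s \<alpha> else q + length (filter (\<lambda>x. x \<noteq> s) (map fst \<beta>)))"
proof -
  define a where "a = length u"
  define L where "L = map thue_morse (levels s \<alpha>)"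
  have lL: "length L = length \<alpha>" unfolding L_def levels_def by simp
  have z: "zip \<alpha> L = u @ \<beta>" using assms unfolding mt_decorate_def L_def by simp
  have la: "length \<alpha> = a + length \<beta>"
    using arg_cong[OF z, of length] lL unfolding a_def by simp
  have "\<beta> = drop a (zip \<alpha> L)" using z unfolding a_def by simp
  then have b: "\<beta> = zip (drop a \<alpha>) (drop a L)" by (simp add: drop_zip)
  have fb: "map fst \<beta> = drop a \<alpha>" using b lL by simp
  have sb: "map snd \<beta> = drop a L" using b lL by simp
  define q where "q = last (0 # levels_from s 0 (take a \<alpha>))"
  have lev: "levels s \<alpha> = levels_from s 0 (take a \<alpha>) @ levels_from s q (drop a \<alpha>)"
    unfolding levels_def q_def using levels_from_append[of s 0 "take a \<alpha>" "drop a \<alpha>"] by simp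
  have la2: "length (levels_from s 0 (take a \<alpha>)) = a" using la by simp
  have "drop a L = map thue_morse (levels_from s q (drop a \<alpha>))"
    unfolding L_def lev using la2 by (simp add: drop_map)
  moreover have "\<beta> \<noteq> [] \<Longrightarrow> sent_len s \<alpha> = q + length (filter (\<lambda>x. x \<noteq> s) (drop a \<alpha>))"
  proof -
    assume "\<beta> \<noteq> []"
    then have ne: "drop a \<alpha> \<noteq> []" using fb by auto
    show ?thesis unfolding sent_len_def lev using last_levels_from[OF ne] ne by simp
  qed
  moreover have "\<alpha> = take a \<alpha> @ map fst \<beta>" using fb by simp
  ultimately show ?thesis using fb sb by (intro exI[of _ a] exI[of _ q]) auto
qed

theorem mainTheorem18:
  fixes A :: "'a set" and s :: 'a and \<alpha> \<alpha>' :: "'a list" and l :: nat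
  assumes "finite A" and "s \<notin> A"
    and "sentence A s \<alpha>" and "sentence A s \<alpha>'"
    and "\<exists>\<beta> u u'. mt_decorate s \<alpha> = u @ \<beta> \<and> mt_decorate s \<alpha>' = u' @ \<beta>
                  \<and> l \<le> length (filter (\<lambda>(x, b). x \<in> A) \<beta>)"
    and "\<bar>real (sent_len s \<alpha>) - real (sent_len s \<alpha>')\<bar> \<le> real l / 2"
  shows "sent_len s \<alpha> = sent_len s \<alpha>'"
proof (cases "l = 0")
  case True then show ?thesis using assms(6) by simp
next
  case l0: False
  obtain \<beta> u u' where d1: "mt_decorate s \<alpha> = u @ \<beta>" and d2: "mt_decorate s \<alpha>' = u' @ \<beta>"
    and lb: "l \<le> length (filter (\<lambda>(x, b). x \<in> A) \<beta>)" using assms(5) by blast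
  define \<gamma> where "\<gamma> = map fst \<beta>"
  define c where "c = length (filter (\<lambda>x. x \<noteq> s) \<gamma>)"
  have bne: "\<beta> \<noteq> []" using lb l0 by auto
  obtain a q where a1: "\<alpha> = take a \<alpha> @ \<gamma>" and s1: "map snd \<beta> = map thue_morse (levels_from s q \<gamma>)"
     and n1: "sent_len s \<alpha> = q + c"
    using suffix_data[OF d1] bne unfolding \<gamma>_def c_def by auto
  obtain a' q' where a2: "\<alpha>' = take a' \<alpha>' @ \<gamma>" and s2: "map snd \<beta> = map thue_morse (levels_from s q' \<gamma>)"
     and n2: "sent_len s \<alpha>' = q' + c"
    using suffix_data[OF d2] bne unfolding \<gamma>_def c_def by auto
  have "set \<gamma> \<subseteq> set \<alpha>" using arg_cong[OF a1, of set] by auto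
  then have gs: "set \<gamma> \<subseteq> A \<union> {s}" using assms(3) unfolding sentence_def by auto
  have "filter (\<lambda>(x, b). x \<in> A) \<beta> = filter (\<lambda>p. fst p \<in> A) \<beta>"
    by (intro filter_cong) auto
  then have "length (filter (\<lambda>(x, b). x \<in> A) \<beta>) = length (filter (\<lambda>x. x \<in> A) \<gamma>)"
    unfolding \<gamma>_def by (simp add: filter_map length_filter_map comp_def)
  also have "filter (\<lambda>x. x \<in> A) \<gamma> = filter (\<lambda>x. x \<noteq> s) \<gamma>"
    using gs assms(2) by (intro filter_cong) auto
  finally have lc: "l \<le> c" using lb unfolding c_def by simp
  have mt: "map tm (levels_from s q \<gamma>) = map tm (levels_from s q' \<gamma>)"
    using s1 s2 by (simp add: thue_morse_tm[abs_def])
  have tr: "\<And>r. 1 \<le> r \<Longrightarrow> r \<le> c \<Longrightarrow> tm (q+r) = tm (q'+r)"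
    using tm_transfer[OF mt] unfolding c_def by blast
  have dq: "2 * (max q q' - min q q') \<le> l"
  proof (cases "q \<le> q'")
    case True
    then have "real (q' - q) = real q' - real q" by simp
    then show ?thesis using True assms(6) unfolding n1 n2 by simp
  next
    case False
    then have "real (q - q') = real q - real q'" by simp
    then show ?thesis using False assms(6) unfolding n1 n2 by simp
  qed
  show ?thesis
  proof (rule ccontr)
    assume ne: "sent_len s \<alpha> \<noteq> sent_len s \<alpha>'"
    then have qne: "q \<noteq> q'" using n1 n2 by auto
    define d where "d = max q q' - min q q'"
    define i where "i = Suc (min q q')"
    have d0: "0 < d" using qne unfolding d_def by auto
    have "tm (i+j) = tm (i+j+d)" if j: "j < 2*d" for j
    proof -
      have "j + 1 \<le> c" using j dq lc unfolding d_def by auto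
      then have "tm (q + (j+1)) = tm (q' + (j+1))" using tr[of "j+1"] by linarith
      then show ?thesis unfolding i_def d_def by (cases "q \<le> q'") (auto simp: max_def min_def add_ac)
    qed
    then show False using cube_free[OF d0, of i] by auto
  qed
qed

end
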